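(* Suppose the real random variable $X$ has a log-concave density $f$ (and $\mathbf P(X>0)>0$, $\mathbf P(X<0)>0$). Let $\zeta:=P-N+1$, where $P$ and $N$ are independent, $P$ has the law of $X$ conditioned on $\{X>0\}$ and $N$ has the law of $X$ conditioned on $\{X<0\}$. Then $\zeta$ takes values in $[1,\infty)$ and for all $\theta\ge0$, \[(X-\theta)\mid\{X>\theta\}\ \le_{lr}\ \zeta,\qquad -(X+\theta)\mid\{X<-\theta\}\ \le_{lr}\ \zeta.\]
   Context: A density $f$ is log-concave if $f(\theta x+(1-\theta)y)\ge f(x)^\theta f(y)^{1-\theta}$ for all $x,y\in\mathbb R$, $\theta\in[0,1]$. For real random variables $U,W$, $U\le_{lr}W$ (likelihood ratio order) means $\mathbf P(U\in A)\mathbf P(W\in B)\ge\mathbf P(U\in B)\mathbf P(W\in A)$ for all measurable $A,B\subset\mathbb R$ with $\sup A\le\inf B$; with densities this reads $f_U(u)f_W(w)\ge f_U(w)f_W(u)$ for all $u\le w$. *)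

theory Defs
  imports "HOL-Probability.Probability"
begin

definition log_concave :: "(real \<Rightarrow> real) \<Rightarrow> bool" where
  "log_concave f \<longleftrightarrow> (\<forall>x y \<theta>. 0 \<le> \<theta> \<and> \<theta> \<le> 1 \<longrightarrow>
      f (\<theta> * x + (1 - \<theta>) * y) \<ge> f x powr \<theta> * f y powr (1 - \<theta>))"

definition lr_le :: "real measure \<Rightarrow> real measure \<Rightarrow> bool" where
  "lr_le U W \<longleftrightarrow> (\<forall>A \<in> sets borel. \<forall>B \<in> sets borel.
      (\<forall>a\<in>A. \<forall>b\<in>B. a \<le> b) \<longrightarrow>
      measure U A * measure W B \<ge> measure U B * measure W A)"

definition cond_law :: "'a measure \<Rightarrow> ('a \<Rightarrow> real) \<Rightarrow> 'a set \<Rightarrow> real measure" where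
  "cond_law M Y E = distr (uniform_measure M E) borel Y"

definition zeta_law :: "'a measure \<Rightarrow> ('a \<Rightarrow> real) \<Rightarrow> real measure" where
  "zeta_law M X = distr
     (cond_law M X {\<omega> \<in> space M. X \<omega> > 0} \<Otimes>\<^sub>M cond_law M X {\<omega> \<in> space M. X \<omega> < 0})
     borel (\<lambda>(p, n). p - n + 1)"

end

theory Submission
  imports Defs
begin

lemma lc_shift:
  fixes f :: "real \<Rightarrow> real"
  assumes lc: "log_concave f" and nn: "\<And>x. f x \<ge> 0" and xy: "x \<le> y" and d: "d \<ge> 0"
  shows "f x * f (y + d) \<le> f (x + d) * f y"
proof (cases "x = y \<or> d = 0 \<or> f x = 0 \<or> f (y + d) = 0")
  case True
  then show ?thesis using nn[of "x+d"] nn[of y] by (auto simp: mult.commute)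
next
  case False
  then have xy': "x < y" and d': "d > 0" and fx: "f x > 0" and fy: "f (y+d) > 0"
    using xy d nn[of x] nn[of "y+d"] by auto
  define l where "l = d / (y - x + d)"
  have l0: "0 < l" and l1: "l < 1" using xy' d' by (auto simp: l_def field_simps)
  have ld: "l * (y - x + d) = d" using xy' d' by (simp add: l_def)
  have e1: "l * (y + d) + (1 - l) * x = x + d"
  proof -
    have "l * (y + d) + (1 - l) * x = x + l * (y - x + d)" by (simp add: algebra_simps)
    then show ?thesis using ld by simp
  qed
  have e2: "l * x + (1 - l) * (y + d) = y"
  proof -
    have "l * x + (1 - l) * (y + d) = (y + d) - l * (y - x + d)" by (simp add: algebra_simps)
    then show ?thesis using ld by simp
  qed
  have h1: "f (x + d) \<ge> f (y+d) powr l * f x powr (1 - l)"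
    using lc l0 l1 unfolding log_concave_def by (metis e1 less_imp_le)
  have h2: "f y \<ge> f x powr l * f (y+d) powr (1 - l)"
    using lc l0 l1 unfolding log_concave_def by (metis e2 less_imp_le)
  have "f x * f (y + d) = (f (y+d) powr l * f x powr (1 - l)) * (f x powr l * f (y+d) powr (1 - l))"
  proof -
    have "(f (y+d) powr l * f x powr (1 - l)) * (f x powr l * f (y+d) powr (1 - l))
        = (f x powr l * f x powr (1 - l)) * (f (y+d) powr l * f (y+d) powr (1 - l))"
      by (simp add: ac_simps)
    also have "\<dots> = f x * f (y+d)" using fx fy by (simp add: powr_add[symmetric])
    finally show ?thesis by simp
  qed
  also have "\<dots> \<le> f (x + d) * f y"
    by (rule mult_mono[OF h1 h2]) (auto intro: mult_nonneg_nonneg simp: nn)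
  finally show ?thesis .
qed


lemma cond_nn:
  assumes D: "distributed M lborel X (\<lambda>x. ennreal (f x))"
    and S[measurable]: "S \<in> sets borel" and T[measurable]: "T \<in> borel_measurable borel"
    and g[measurable]: "g \<in> borel_measurable borel"
  shows "(\<integral>\<^sup>+y. g y \<partial>distr (uniform_measure M (X -` S \<inter> space M)) borel (\<lambda>\<omega>. T (X \<omega>)))
      = (\<integral>\<^sup>+x. ennreal (f x) * (indicator S x * g (T x)) \<partial>lborel) / emeasure M (X -` S \<inter> space M)"
proof -
  have X[measurable]: "X \<in> borel_measurable M"
    using D by (auto simp: distributed_def)
  have E[measurable]: "X -` S \<inter> space M \<in> sets M" by measurable
  have m: "(\<lambda>\<omega>. T (X \<omega>)) \<in> borel_measurable (uniform_measure M (X -` S \<inter> space M))"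
    by (subst measurable_cong_sets[OF sets_uniform_measure refl]) measurable
  have "(\<integral>\<^sup>+y. g y \<partial>distr (uniform_measure M (X -` S \<inter> space M)) borel (\<lambda>\<omega>. T (X \<omega>)))
      = (\<integral>\<^sup>+\<omega>. g (T (X \<omega>)) \<partial>uniform_measure M (X -` S \<inter> space M))"
    using m by (simp add: nn_integral_distr)
  also have "\<dots> = (\<integral>\<^sup>+\<omega>. g (T (X \<omega>)) * indicator (X -` S \<inter> space M) \<omega> \<partial>M) / emeasure M (X -` S \<inter> space M)"
    by (rule nn_integral_uniform_measure) measurable
  also have "(\<integral>\<^sup>+\<omega>. g (T (X \<omega>)) * indicator (X -` S \<inter> space M) \<omega> \<partial>M)
      = (\<integral>\<^sup>+\<omega>. indicator S (X \<omega>) * g (T (X \<omega>)) \<partial>M)"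
    by (intro nn_integral_cong) (auto simp: indicator_def)
  also have "\<dots> = (\<integral>\<^sup>+x. ennreal (f x) * (indicator S x * g (T x)) \<partial>lborel)"
    by (rule distributed_nn_integral[OF D, symmetric]) simp
  finally show ?thesis .
qed


lemma lb_shift:
  fixes g :: "real \<Rightarrow> ennreal"
  assumes [measurable]: "g \<in> borel_measurable borel"
  shows "(\<integral>\<^sup>+x. g (x + t) \<partial>lborel) = (\<integral>\<^sup>+x. g x \<partial>lborel)"
  using nn_integral_real_affine[of g 1 t] by (simp add: add.commute)

lemma lb_refl:
  fixes g :: "real \<Rightarrow> ennreal"
  assumes [measurable]: "g \<in> borel_measurable borel"
  shows "(\<integral>\<^sup>+x. g (t - x) \<partial>lborel) = (\<integral>\<^sup>+x. g x \<partial>lborel)"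
  using nn_integral_real_affine[of g "-1" t] by simp

lemma key1:
  fixes f :: "real \<Rightarrow> real"
  assumes lc: "log_concave f" and nn: "\<And>x. f x \<ge> 0" and fm[measurable]: "f \<in> borel_measurable borel"
    and th: "\<theta> \<ge> 0"
    and A[measurable]: "A \<in> sets borel" and B[measurable]: "B \<in> sets borel"
    and AB: "\<forall>a\<in>A. \<forall>b\<in>B. a \<le> b"
  shows "(\<integral>\<^sup>+x. ennreal (f x) * (indicator {\<theta><..} x * indicator B (x - \<theta>)) \<partial>lborel) *
         (\<integral>\<^sup>+n. ennreal (f n) * (indicator {..<0} n * (\<integral>\<^sup>+p. ennreal (f p) * (indicator {0<..} p * indicator A (p - n + 1)) \<partial>lborel)) \<partial>lborel)
       \<le> (\<integral>\<^sup>+x. ennreal (f x) * (indicator {\<theta><..} x * indicator A (x - \<theta>)) \<partial>lborel) *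
         (\<integral>\<^sup>+n. ennreal (f n) * (indicator {..<0} n * (\<integral>\<^sup>+p. ennreal (f p) * (indicator {0<..} p * indicator B (p - n + 1)) \<partial>lborel)) \<partial>lborel)"
proof -
  define G where "G = (\<lambda>C u. ennreal (f (u + \<theta>)) * (indicator {0<..} u * indicator C u :: ennreal))"
  define K where "K = (\<lambda>C n. \<integral>\<^sup>+p. ennreal (f p) * (indicator {0<..} p * indicator C (p - n + 1)) \<partial>lborel)"
  have Gm[measurable]: "G C \<in> borel_measurable borel" if [measurable]: "C \<in> sets borel" for C
    unfolding G_def by measurable
  have Km[measurable]: "K C \<in> borel_measurable borel" if [measurable]: "C \<in> sets borel" for C
    unfolding K_def by measurable
  have IG: "(\<integral>\<^sup>+x. ennreal (f x) * (indicator {\<theta><..} x * indicator C (x - \<theta>)) \<partial>lborel) = integral\<^sup>N lborel (G C)"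
    if [measurable]: "C \<in> sets borel" for C
  proof -
    have "(\<integral>\<^sup>+x. ennreal (f x) * (indicator {\<theta><..} x * indicator C (x - \<theta>)) \<partial>lborel)
        = (\<integral>\<^sup>+x. ennreal (f (x + \<theta>)) * (indicator {\<theta><..} (x + \<theta>) * indicator C (x + \<theta> - \<theta>)) \<partial>lborel)"
      by (rule lb_shift[symmetric]) measurable
    also have "\<dots> = integral\<^sup>N lborel (G C)"
      unfolding G_def by (intro nn_integral_cong) (auto simp: indicator_def)
    finally show ?thesis .
  qed
  let ?a = "\<lambda>n. ennreal (f n) * (indicator {..<0} n :: ennreal)"
  have LHS: "integral\<^sup>N lborel (G B) * (\<integral>\<^sup>+n. ennreal (f n) * (indicator {..<0} n * K A n) \<partial>lborel)
     = (\<integral>\<^sup>+n. \<integral>\<^sup>+u. \<integral>\<^sup>+p. (G B u * ?a n) * (ennreal (f p) * (indicator {0<..} p * indicator A (p - n + 1))) \<partial>lborel \<partial>lborel \<partial>lborel)"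
  proof -
    have "integral\<^sup>N lborel (G B) * (\<integral>\<^sup>+n. ennreal (f n) * (indicator {..<0} n * K A n) \<partial>lborel)
       = (\<integral>\<^sup>+n. integral\<^sup>N lborel (G B) * (ennreal (f n) * (indicator {..<0} n * K A n)) \<partial>lborel)"
      by (rule nn_integral_cmult[symmetric]) measurable
    also have "\<dots> = (\<integral>\<^sup>+n. \<integral>\<^sup>+u. \<integral>\<^sup>+p. (G B u * ?a n) * (ennreal (f p) * (indicator {0<..} p * indicator A (p - n + 1))) \<partial>lborel \<partial>lborel \<partial>lborel)"
    proof (intro nn_integral_cong)
      fix n
      have "(\<integral>\<^sup>+u. \<integral>\<^sup>+p. (G B u * ?a n) * (ennreal (f p) * (indicator {0<..} p * indicator A (p - n + 1))) \<partial>lborel \<partial>lborel)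
          = (\<integral>\<^sup>+u. G B u * (?a n * K A n) \<partial>lborel)"
        unfolding K_def
        by (intro nn_integral_cong, subst nn_integral_cmult) (measurable, simp add: ac_simps)
      also have "\<dots> = integral\<^sup>N lborel (G B) * (?a n * K A n)"
        by (rule nn_integral_multc) measurable
      finally show "integral\<^sup>N lborel (G B) * (ennreal (f n) * (indicator {..<0} n * K A n)) =
         (\<integral>\<^sup>+u. \<integral>\<^sup>+p. (G B u * ?a n) * (ennreal (f p) * (indicator {0<..} p * indicator A (p - n + 1))) \<partial>lborel \<partial>lborel)"
        by (simp add: ac_simps)
    qed
    finally show ?thesis .
  qed
  have RHS: "integral\<^sup>N lborel (G A) * (\<integral>\<^sup>+n. ennreal (f n) * (indicator {..<0} n * K B n) \<partial>lborel)
     = (\<integral>\<^sup>+n. \<integral>\<^sup>+u. \<integral>\<^sup>+p. (?a n * (ennreal (f (u + n - 1)) * (indicator {0<..} (u + n - 1) * indicator B u))) * G A (p - n + 1) \<partial>lborel \<partial>lborel \<partial>lborel)"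
  proof -
    have "integral\<^sup>N lborel (G A) * (\<integral>\<^sup>+n. ennreal (f n) * (indicator {..<0} n * K B n) \<partial>lborel)
       = (\<integral>\<^sup>+n. integral\<^sup>N lborel (G A) * (ennreal (f n) * (indicator {..<0} n * K B n)) \<partial>lborel)"
      by (rule nn_integral_cmult[symmetric]) measurable
    also have "\<dots> = (\<integral>\<^sup>+n. \<integral>\<^sup>+u. \<integral>\<^sup>+p. (?a n * (ennreal (f (u + n - 1)) * (indicator {0<..} (u + n - 1) * indicator B u))) * G A (p - n + 1) \<partial>lborel \<partial>lborel \<partial>lborel)"
    proof (intro nn_integral_cong)
      fix n
      have "(\<integral>\<^sup>+u. \<integral>\<^sup>+p. (?a n * (ennreal (f (u + n - 1)) * (indicator {0<..} (u + n - 1) * indicator B u))) * G A (p - n + 1) \<partial>lborel \<partial>lborel)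
          = (\<integral>\<^sup>+u. (?a n * (ennreal (f (u + n - 1)) * (indicator {0<..} (u + n - 1) * indicator B u))) * integral\<^sup>N lborel (G A) \<partial>lborel)"
      proof (intro nn_integral_cong)
        fix u
        have "(\<integral>\<^sup>+p. G A (p - n + 1) \<partial>lborel) = (\<integral>\<^sup>+p. G A (p + (1 - n)) \<partial>lborel)"
          by (simp add: algebra_simps)
        also have "\<dots> = integral\<^sup>N lborel (G A)" by (rule lb_shift) measurable
        finally have e: "(\<integral>\<^sup>+p. G A (p - n + 1) \<partial>lborel) = integral\<^sup>N lborel (G A)" .
        show "(\<integral>\<^sup>+p. (?a n * (ennreal (f (u + n - 1)) * (indicator {0<..} (u + n - 1) * indicator B u))) * G A (p - n + 1) \<partial>lborel)
          = (?a n * (ennreal (f (u + n - 1)) * (indicator {0<..} (u + n - 1) * indicator B u))) * integral\<^sup>N lborel (G A)"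
          by (subst nn_integral_cmult) (measurable, simp add: e)
      qed
      also have "\<dots> = (\<integral>\<^sup>+u. ?a n * (ennreal (f (u + n - 1)) * (indicator {0<..} (u + n - 1) * indicator B u)) \<partial>lborel) * integral\<^sup>N lborel (G A)"
        by (rule nn_integral_multc) measurable
      also have "(\<integral>\<^sup>+u. ?a n * (ennreal (f (u + n - 1)) * (indicator {0<..} (u + n - 1) * indicator B u)) \<partial>lborel)
          = ?a n * (\<integral>\<^sup>+u. ennreal (f (u + n - 1)) * (indicator {0<..} (u + n - 1) * indicator B u) \<partial>lborel)"
        by (rule nn_integral_cmult) measurable
      also have "(\<integral>\<^sup>+u. ennreal (f (u + n - 1)) * (indicator {0<..} (u + n - 1) * indicator B u) \<partial>lborel) = K B n"
      proof -
        have "K B n = (\<integral>\<^sup>+u. ennreal (f (u + (n - 1))) * (indicator {0<..} (u + (n - 1)) * indicator B (u + (n - 1) - n + 1)) \<partial>lborel)"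
          unfolding K_def by (rule lb_shift[symmetric]) measurable
        then show ?thesis by (simp add: algebra_simps)
      qed
      finally show "integral\<^sup>N lborel (G A) * (ennreal (f n) * (indicator {..<0} n * K B n)) =
         (\<integral>\<^sup>+u. \<integral>\<^sup>+p. (?a n * (ennreal (f (u + n - 1)) * (indicator {0<..} (u + n - 1) * indicator B u))) * G A (p - n + 1) \<partial>lborel \<partial>lborel)"
        by (simp add: ac_simps)
    qed
    finally show ?thesis .
  qed
  have pw: "(G B u * ?a n) * (ennreal (f p) * (indicator {0<..} p * indicator A (p - n + 1)))
      \<le> (?a n * (ennreal (f (u + n - 1)) * (indicator {0<..} (u + n - 1) * indicator B u))) * G A (p - n + 1)"
    for u n p
  proof (cases "u > 0 \<and> u \<in> B \<and> n < 0 \<and> p > 0 \<and> p - n + 1 \<in> A")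
    case False
    then show ?thesis unfolding G_def by (auto simp: indicator_def)
  next
    case True
    then have zu: "p - n + 1 \<le> u" using AB by auto
    have r: "f p * f ((p - n + 1 + \<theta>) + (u - (p - n + 1))) \<le> f (p + (u - (p - n + 1))) * f (p - n + 1 + \<theta>)"
      by (rule lc_shift[OF lc nn]) (use True th zu in auto)
    have r2: "f (u + \<theta>) * f n * f p \<le> f n * f (u + n - 1) * f (p - n + 1 + \<theta>)"
    proof -
      have "f (u + \<theta>) * f n * f p = f n * (f p * f ((p - n + 1 + \<theta>) + (u - (p - n + 1))))"
        by (simp add: algebra_simps)
      also have "\<dots> \<le> f n * (f (p + (u - (p - n + 1))) * f (p - n + 1 + \<theta>))"
        using r nn by (intro mult_left_mono) auto
      also have "\<dots> = f n * f (u + n - 1) * f (p - n + 1 + \<theta>)" by (simp add: algebra_simps)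
      finally show ?thesis .
    qed
    have ind: "u + n - 1 > 0" "p - n + 1 > 0" using True zu by auto
    have "(G B u * ?a n) * (ennreal (f p) * (indicator {0<..} p * indicator A (p - n + 1)))
        = ennreal (f (u + \<theta>) * f n * f p)"
      using True nn unfolding G_def by (simp add: ennreal_mult)
    also have "\<dots> \<le> ennreal (f n * f (u + n - 1) * f (p - n + 1 + \<theta>))"
      by (rule ennreal_leI[OF r2])
    also have "\<dots> = (?a n * (ennreal (f (u + n - 1)) * (indicator {0<..} (u + n - 1) * indicator B u))) * G A (p - n + 1)"
      using True nn ind unfolding G_def by (simp add: ennreal_mult)
    finally show ?thesis .
  qed
  have "integral\<^sup>N lborel (G B) * (\<integral>\<^sup>+n. ennreal (f n) * (indicator {..<0} n * K A n) \<partial>lborel)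
     \<le> integral\<^sup>N lborel (G A) * (\<integral>\<^sup>+n. ennreal (f n) * (indicator {..<0} n * K B n) \<partial>lborel)"
    unfolding LHS RHS by (intro nn_integral_mono pw)
  then show ?thesis unfolding IG[OF A] IG[OF B] K_def .
qed


lemma key2:
  fixes f :: "real \<Rightarrow> real"
  assumes lc: "log_concave f" and nn: "\<And>x. f x \<ge> 0" and fm[measurable]: "f \<in> borel_measurable borel"
    and th: "\<theta> \<ge> 0"
    and A[measurable]: "A \<in> sets borel" and B[measurable]: "B \<in> sets borel"
    and AB: "\<forall>a\<in>A. \<forall>b\<in>B. a \<le> b"
  shows "(\<integral>\<^sup>+x. ennreal (f x) * (indicator {..<-\<theta>} x * indicator B (- (x + \<theta>))) \<partial>lborel) *
         (\<integral>\<^sup>+p. ennreal (f p) * (indicator {0<..} p * (\<integral>\<^sup>+n. ennreal (f n) * (indicator {..<0} n * indicator A (p - n + 1)) \<partial>lborel)) \<partial>lborel)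
       \<le> (\<integral>\<^sup>+x. ennreal (f x) * (indicator {..<-\<theta>} x * indicator A (- (x + \<theta>))) \<partial>lborel) *
         (\<integral>\<^sup>+p. ennreal (f p) * (indicator {0<..} p * (\<integral>\<^sup>+n. ennreal (f n) * (indicator {..<0} n * indicator B (p - n + 1)) \<partial>lborel)) \<partial>lborel)"
proof -
  define g where "g = (\<lambda>x. f (- x))"
  have gm[measurable]: "g \<in> borel_measurable borel" unfolding g_def by measurable
  have gnn: "\<And>x. g x \<ge> 0" unfolding g_def using nn by auto
  have glc: "log_concave g"
    unfolding log_concave_def g_def
  proof (intro allI impI)
    fix x y t :: real assume t: "0 \<le> t \<and> t \<le> 1"
    have "f (t * (- x) + (1 - t) * (- y)) \<ge> f (- x) powr t * f (- y) powr (1 - t)"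
      using lc t unfolding log_concave_def by blast
    moreover have "t * (- x) + (1 - t) * (- y) = - (t * x + (1 - t) * y)" by (simp add: algebra_simps)
    ultimately show "f (- x) powr t * f (- y) powr (1 - t) \<le> f (- (t * x + (1 - t) * y))" by simp
  qed
  have I: "(\<integral>\<^sup>+x. ennreal (g x) * (indicator {\<theta><..} x * indicator C (x - \<theta>)) \<partial>lborel)
      = (\<integral>\<^sup>+x. ennreal (f x) * (indicator {..<-\<theta>} x * indicator C (- (x + \<theta>))) \<partial>lborel)"
    if [measurable]: "C \<in> sets borel" for C
  proof -
    have "(\<integral>\<^sup>+x. ennreal (f x) * (indicator {..<-\<theta>} x * indicator C (- (x + \<theta>))) \<partial>lborel)
       = (\<integral>\<^sup>+x. ennreal (f (0 - x)) * (indicator {..<-\<theta>} (0 - x) * indicator C (- ((0 - x) + \<theta>))) \<partial>lborel)"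
      by (rule lb_refl[symmetric]) measurable
    also have "\<dots> = (\<integral>\<^sup>+x. ennreal (g x) * (indicator {\<theta><..} x * indicator C (x - \<theta>)) \<partial>lborel)"
      unfolding g_def by (intro nn_integral_cong) (auto simp: indicator_def)
    finally show ?thesis by simp
  qed
  have J: "(\<integral>\<^sup>+n. ennreal (g n) * (indicator {..<0} n * (\<integral>\<^sup>+p. ennreal (g p) * (indicator {0<..} p * indicator C (p - n + 1)) \<partial>lborel)) \<partial>lborel)
     = (\<integral>\<^sup>+p. ennreal (f p) * (indicator {0<..} p * (\<integral>\<^sup>+n. ennreal (f n) * (indicator {..<0} n * indicator C (p - n + 1)) \<partial>lborel)) \<partial>lborel)"
    if [measurable]: "C \<in> sets borel" for C
  proof -
    have inner: "(\<integral>\<^sup>+p. ennreal (g p) * (indicator {0<..} p * indicator C (p - n + 1)) \<partial>lborel)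
        = (\<integral>\<^sup>+q. ennreal (f q) * (indicator {..<0} q * indicator C (- q - n + 1)) \<partial>lborel)" for n
    proof -
      have "(\<integral>\<^sup>+q. ennreal (f q) * (indicator {..<0} q * indicator C (- q - n + 1)) \<partial>lborel)
        = (\<integral>\<^sup>+q. ennreal (f (0 - q)) * (indicator {..<0} (0 - q) * indicator C (- (0 - q) - n + 1)) \<partial>lborel)"
        by (rule lb_refl[symmetric]) measurable
      also have "\<dots> = (\<integral>\<^sup>+p. ennreal (g p) * (indicator {0<..} p * indicator C (p - n + 1)) \<partial>lborel)"
        unfolding g_def by (intro nn_integral_cong) (auto simp: indicator_def)
      finally show ?thesis by simp
    qed
    define H where "H = (\<lambda>p. ennreal (f p) * (indicator {0<..} p * (\<integral>\<^sup>+n. ennreal (f n) * (indicator {..<0} n * indicator C (p - n + 1)) \<partial>lborel)))"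
    have "(\<integral>\<^sup>+n. ennreal (g n) * (indicator {..<0} n * (\<integral>\<^sup>+p. ennreal (g p) * (indicator {0<..} p * indicator C (p - n + 1)) \<partial>lborel)) \<partial>lborel)
      = (\<integral>\<^sup>+n. ennreal (f (0 - n)) * (indicator {0<..} (0 - n) * (\<integral>\<^sup>+q. ennreal (f q) * (indicator {..<0} q * indicator C (- q - n + 1)) \<partial>lborel)) \<partial>lborel)"
      apply (simp only: inner)
      unfolding g_def by (intro nn_integral_cong) (auto simp: indicator_def)
    also have "\<dots> = (\<integral>\<^sup>+n. H (0 - n) \<partial>lborel)"
      unfolding H_def by (intro nn_integral_cong) (simp add: algebra_simps)
    also have "\<dots> = integral\<^sup>N lborel H" by (rule lb_refl) (unfold H_def, measurable)
    finally show ?thesis unfolding H_def .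
  qed
  show ?thesis
    using key1[OF glc gnn gm th A B AB] unfolding I[OF A] I[OF B] J[OF A] J[OF B] .
qed


lemma cond_prob:
  assumes M: "prob_space M" and X[measurable]: "X \<in> borel_measurable M"
    and S[measurable]: "S \<in> sets borel" and T[measurable]: "T \<in> borel_measurable borel"
    and ne: "emeasure M (X -` S \<inter> space M) \<noteq> 0"
  shows "prob_space (distr (uniform_measure M (X -` S \<inter> space M)) borel (\<lambda>\<omega>. T (X \<omega>)))"
proof -
  interpret M: prob_space M by fact
  have "prob_space (uniform_measure M (X -` S \<inter> space M))"
    by (rule prob_space_uniform_measure[OF ne]) simp
  then interpret U: prob_space "uniform_measure M (X -` S \<inter> space M)" .
  show ?thesis
    by (rule U.prob_space_distr, subst measurable_cong_sets[OF sets_uniform_measure refl]) measurable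
qed

lemma W_formula:
  fixes X :: "'a \<Rightarrow> real" and f :: "real \<Rightarrow> real"
  assumes M: "prob_space M" and D: "distributed M lborel X (\<lambda>x. ennreal (f x))"
    and p0: "emeasure M (X -` {0<..} \<inter> space M) \<noteq> 0"
    and n0: "emeasure M (X -` {..<0} \<inter> space M) \<noteq> 0"
    and B[measurable]: "B \<in> sets borel" and nn: "\<And>x. f x \<ge> 0"
  defines "P \<equiv> distr (uniform_measure M (X -` {0<..} \<inter> space M)) borel X"
    and "N \<equiv> distr (uniform_measure M (X -` {..<0} \<inter> space M)) borel X"
    and "cp \<equiv> emeasure M (X -` {0<..} \<inter> space M)"
    and "cn \<equiv> emeasure M (X -` {..<0} \<inter> space M)"
  shows "prob_space (distr (P \<Otimes>\<^sub>M N) borel (\<lambda>(p, n). p - n + 1))"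
    and "emeasure (distr (P \<Otimes>\<^sub>M N) borel (\<lambda>(p, n). p - n + 1)) B =
      (\<integral>\<^sup>+p. ennreal (f p) * (indicator {0<..} p * (\<integral>\<^sup>+n. ennreal (f n) * (indicator {..<0} n * indicator B (p - n + 1)) \<partial>lborel)) \<partial>lborel) / cn / cp"
    and "emeasure (distr (P \<Otimes>\<^sub>M N) borel (\<lambda>(p, n). p - n + 1)) B =
      (\<integral>\<^sup>+n. ennreal (f n) * (indicator {..<0} n * (\<integral>\<^sup>+p. ennreal (f p) * (indicator {0<..} p * indicator B (p - n + 1)) \<partial>lborel)) \<partial>lborel) / cp / cn"
proof -
  have X[measurable]: "X \<in> borel_measurable M"
    using D by (auto simp: distributed_def)
  have fm[measurable]: "f \<in> borel_measurable borel"
  proof -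
    have "(\<lambda>x. ennreal (f x)) \<in> borel_measurable borel"
      using D by (simp add: distributed_def)
    then have "(\<lambda>x. enn2real (ennreal (f x))) \<in> borel_measurable borel" by measurable
    then show ?thesis by (simp add: nn)
  qed
  have s1: "{0<..} \<in> sets (borel::real measure)" "{..<0} \<in> sets (borel::real measure)" by (simp_all add: lessThan_borel greaterThan_borel)
  have Pp: "prob_space P" unfolding P_def
    using cond_prob[OF M X s1(1), where T="\<lambda>x. x"] p0 by simp
  have Np: "prob_space N" unfolding N_def
    using cond_prob[OF M X s1(2), where T="\<lambda>x. x"] n0 by simp
  interpret P: prob_space P by fact
  interpret N: prob_space N by fact
  interpret PN: pair_sigma_finite P N ..
  have sP[simp]: "sets P = sets borel" unfolding P_def by simp
  have sN[simp]: "sets N = sets borel" unfolding N_def by simp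
  have mz[measurable]: "(\<lambda>(p, n). p - n + 1::real) \<in> borel_measurable (P \<Otimes>\<^sub>M N)"
    by (subst measurable_cong_sets[OF sets_pair_measure_cong[OF sP sN] refl]) measurable
  have mi: "(\<lambda>x. indicator B (case x of (p, n) \<Rightarrow> p - n + 1) :: ennreal) \<in> borel_measurable (P \<Otimes>\<^sub>M N)"
    by (rule measurable_compose[OF mz]) measurable
  show "prob_space (distr (P \<Otimes>\<^sub>M N) borel (\<lambda>(p, n). p - n + 1))"
    by (rule prob_space.prob_space_distr[OF prob_space_pair[OF Pp Np] mz])
  have fP: "(\<integral>\<^sup>+y. g y \<partial>P) = (\<integral>\<^sup>+x. ennreal (f x) * (indicator {0<..} x * g x) \<partial>lborel) / cp"
    if [measurable]: "g \<in> borel_measurable borel" for g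
    unfolding P_def cp_def using cond_nn[OF D _ _ that, of "{0<..}" "\<lambda>x. x"] by simp
  have fN: "(\<integral>\<^sup>+y. g y \<partial>N) = (\<integral>\<^sup>+x. ennreal (f x) * (indicator {..<0} x * g x) \<partial>lborel) / cn"
    if [measurable]: "g \<in> borel_measurable borel" for g
    unfolding N_def cn_def using cond_nn[OF D _ _ that, of "{..<0}" "\<lambda>x. x"] by simp
  have e0: "emeasure (distr (P \<Otimes>\<^sub>M N) borel (\<lambda>(p, n). p - n + 1)) B
      = (\<integral>\<^sup>+x. indicator B (case x of (p, n) \<Rightarrow> p - n + 1) \<partial>(P \<Otimes>\<^sub>M N))"
    by (subst nn_integral_indicator[symmetric], simp, subst nn_integral_distr) (use mz in auto)
  have div: "(\<integral>\<^sup>+x. ennreal (f x) * (indicator C x * (K x / c)) \<partial>lborel)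
       = (\<integral>\<^sup>+x. ennreal (f x) * (indicator C x * K x) \<partial>lborel) / c"
    if [measurable]: "K \<in> borel_measurable borel" "C \<in> sets borel" for K C and c :: ennreal
    unfolding divide_ennreal_def
    by (subst nn_integral_multc[symmetric]) (measurable, simp add: ac_simps)
  show "emeasure (distr (P \<Otimes>\<^sub>M N) borel (\<lambda>(p, n). p - n + 1)) B =
      (\<integral>\<^sup>+p. ennreal (f p) * (indicator {0<..} p * (\<integral>\<^sup>+n. ennreal (f n) * (indicator {..<0} n * indicator B (p - n + 1)) \<partial>lborel)) \<partial>lborel) / cn / cp"
  proof -
    have "(\<integral>\<^sup>+x. indicator B (case x of (p, n) \<Rightarrow> p - n + 1) \<partial>(P \<Otimes>\<^sub>M N))
        = (\<integral>\<^sup>+p. \<integral>\<^sup>+n. indicator B (p - n + 1) \<partial>N \<partial>P)"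
      by (subst N.nn_integral_fst[symmetric, OF mi]) simp
    also have "\<dots> = (\<integral>\<^sup>+p. (\<integral>\<^sup>+n. ennreal (f n) * (indicator {..<0} n * indicator B (p - n + 1)) \<partial>lborel) / cn \<partial>P)"
      by (intro nn_integral_cong fN) measurable
    also have "\<dots> = (\<integral>\<^sup>+p. ennreal (f p) * (indicator {0<..} p * ((\<integral>\<^sup>+n. ennreal (f n) * (indicator {..<0} n * indicator B (p - n + 1)) \<partial>lborel) / cn)) \<partial>lborel) / cp"
      by (rule fP) measurable
    also have "\<dots> = (\<integral>\<^sup>+p. ennreal (f p) * (indicator {0<..} p * (\<integral>\<^sup>+n. ennreal (f n) * (indicator {..<0} n * indicator B (p - n + 1)) \<partial>lborel)) \<partial>lborel) / cn / cp"
      by (subst div) measurable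
    finally show ?thesis using e0 by simp
  qed
  show "emeasure (distr (P \<Otimes>\<^sub>M N) borel (\<lambda>(p, n). p - n + 1)) B =
      (\<integral>\<^sup>+n. ennreal (f n) * (indicator {..<0} n * (\<integral>\<^sup>+p. ennreal (f p) * (indicator {0<..} p * indicator B (p - n + 1)) \<partial>lborel)) \<partial>lborel) / cp / cn"
  proof -
    have "(\<integral>\<^sup>+x. indicator B (case x of (p, n) \<Rightarrow> p - n + 1) \<partial>(P \<Otimes>\<^sub>M N))
        = (\<integral>\<^sup>+n. \<integral>\<^sup>+p. indicator B (p - n + 1) \<partial>P \<partial>N)"
      by (subst PN.nn_integral_snd[symmetric, OF mi]) simp
    also have "\<dots> = (\<integral>\<^sup>+n. (\<integral>\<^sup>+p. ennreal (f p) * (indicator {0<..} p * indicator B (p - n + 1)) \<partial>lborel) / cp \<partial>N)"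
      by (intro nn_integral_cong fP) measurable
    also have "\<dots> = (\<integral>\<^sup>+n. ennreal (f n) * (indicator {..<0} n * ((\<integral>\<^sup>+p. ennreal (f p) * (indicator {0<..} p * indicator B (p - n + 1)) \<partial>lborel) / cp)) \<partial>lborel) / cn"
      by (rule fN) measurable
    also have "\<dots> = (\<integral>\<^sup>+n. ennreal (f n) * (indicator {..<0} n * (\<integral>\<^sup>+p. ennreal (f p) * (indicator {0<..} p * indicator B (p - n + 1)) \<partial>lborel)) \<partial>lborel) / cp / cn"
      by (subst div) measurable
    finally show ?thesis using e0 by simp
  qed
qed


lemma lr_from_enn:
  assumes U: "prob_space U" and W: "prob_space W"
    and H: "\<And>A B. A \<in> sets borel \<Longrightarrow> B \<in> sets borel \<Longrightarrow> (\<forall>a\<in>A. \<forall>b\<in>B. a \<le> b) \<Longrightarrow>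
       emeasure U B * emeasure W A \<le> emeasure U A * emeasure W B"
  shows "lr_le U W"
  unfolding lr_le_def
proof (intro ballI impI)
  fix A B :: "real set" assume A: "A \<in> sets borel" and B: "B \<in> sets borel" and AB: "\<forall>a\<in>A. \<forall>b\<in>B. a \<le> b"
  interpret U: prob_space U by fact
  interpret W: prob_space W by fact
  have fin: "emeasure U A * emeasure W B < top"
  proof -
    have "emeasure U A * emeasure W B \<le> 1 * 1"
      by (intro mult_mono U.emeasure_le_1 W.emeasure_le_1) auto
    then show ?thesis by (simp add: order_le_less_trans)
  qed
  have "measure U B * measure W A = enn2real (emeasure U B * emeasure W A)"
    by (simp add: measure_def enn2real_mult)
  also have "\<dots> \<le> enn2real (emeasure U A * emeasure W B)"
    by (rule enn2real_mono[OF H[OF A B AB] fin])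
  also have "\<dots> = measure U A * measure W B"
    by (simp add: measure_def enn2real_mult)
  finally show "measure U B * measure W A \<le> measure U A * measure W B" .
qed

lemma ineq_div:
  fixes a b c d k1 k2 k3 :: ennreal
  assumes "b * c \<le> a * d"
  shows "b / k1 * (c / k2 / k3) \<le> a / k1 * (d / k2 / k3)"
proof -
  have "b / k1 * (c / k2 / k3) = (b * c) * (inverse k1 * inverse k2 * inverse k3)"
    by (simp add: divide_ennreal_def ac_simps)
  also have "\<dots> \<le> (a * d) * (inverse k1 * inverse k2 * inverse k3)"
    by (rule mult_right_mono[OF assms]) simp
  also have "\<dots> = a / k1 * (d / k2 / k3)"
    by (simp add: divide_ennreal_def ac_simps)
  finally show ?thesis .
qed

theorem lemma3p1:
  fixes M :: "'a measure" and X :: "'a \<Rightarrow> real" and f :: "real \<Rightarrow> real"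
  assumes "prob_space M"
    and "X \<in> borel_measurable M"
    and "\<And>x. f x \<ge> 0"
    and "distributed M lborel X (\<lambda>x. ennreal (f x))"
    and "log_concave f"
    and "measure M {\<omega> \<in> space M. X \<omega> > 0} > 0"
    and "measure M {\<omega> \<in> space M. X \<omega> < 0} > 0"
  shows "measure (zeta_law M X) {1..} = 1
    \<and> (\<forall>\<theta>::real. \<theta> \<ge> 0 \<longrightarrow>
        (measure M {\<omega> \<in> space M. X \<omega> > \<theta>} > 0 \<longrightarrow>
           lr_le (cond_law M (\<lambda>\<omega>. X \<omega> - \<theta>) {\<omega> \<in> space M. X \<omega> > \<theta>}) (zeta_law M X))
      \<and> (measure M {\<omega> \<in> space M. X \<omega> < - \<theta>} > 0 \<longrightarrow>
           lr_le (cond_law M (\<lambda>\<omega>. - (X \<omega> + \<theta>)) {\<omega> \<in> space M. X \<omega> < - \<theta>}) (zeta_law M X)))"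
proof -
  note Mp = assms(1) and Xm[measurable] = assms(2) and nn = assms(3) and D = assms(4) and lc = assms(5)
  interpret M: prob_space M by fact
  have fm[measurable]: "f \<in> borel_measurable borel"
  proof -
    have "(\<lambda>x. ennreal (f x)) \<in> borel_measurable borel"
      using D by (simp add: distributed_def)
    then have "(\<lambda>x. enn2real (ennreal (f x))) \<in> borel_measurable borel" by measurable
    then show ?thesis by (simp add: nn)
  qed
  have sgt: "{\<omega> \<in> space M. c < X \<omega>} = X -` {c<..} \<inter> space M" for c by auto
  have slt: "{\<omega> \<in> space M. X \<omega> < c} = X -` {..<c} \<inter> space M" for c by auto
  have ne: "emeasure M E \<noteq> 0" if "measure M E > 0" for E
    using that by (auto simp: M.emeasure_eq_measure)
  have p0: "emeasure M (X -` {0<..} \<inter> space M) \<noteq> 0" using ne assms(6) sgt by simp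
  have n0: "emeasure M (X -` {..<0} \<inter> space M) \<noteq> 0" using ne assms(7) slt by simp
  define W where "W = distr (distr (uniform_measure M (X -` {0<..} \<inter> space M)) borel X \<Otimes>\<^sub>M
      distr (uniform_measure M (X -` {..<0} \<inter> space M)) borel X) borel (\<lambda>(p, n). p - n + 1)"
  have Z: "zeta_law M X = W"
    unfolding W_def zeta_law_def cond_law_def sgt slt ..
  note WF = W_formula[OF Mp D p0 n0 _ nn, folded W_def]
  have Wp: "prob_space W" using WF(1)[OF sets.top] .
  interpret W: prob_space W by fact
  have sW[simp]: "space W = UNIV" unfolding W_def by simp
  have part1: "measure W {1..} = 1"
  proof -
    have "emeasure W {1..} = emeasure W UNIV"
      unfolding WF(2)[of "{1..}", OF atLeast_borel] WF(2)[OF sets.top[of borel, unfolded space_borel]]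
    proof (intro arg_cong2[where f="(/)"] refl nn_integral_cong)
      fix p :: real
      show "ennreal (f p) * (indicator {0<..} p * (\<integral>\<^sup>+n. ennreal (f n) * (indicator {..<0} n * indicator {1..} (p - n + 1)) \<partial>lborel))
        = ennreal (f p) * (indicator {0<..} p * (\<integral>\<^sup>+n. ennreal (f n) * (indicator {..<0} n * indicator UNIV (p - n + 1)) \<partial>lborel))"
      proof (cases "p > 0")
        case True
        then show ?thesis
          by (intro arg_cong[where f="\<lambda>x. ennreal (f p) * (indicator {0<..} p * x)"] nn_integral_cong)
             (auto simp: indicator_def)
      qed simp
    qed
    then show ?thesis using W.prob_space by (simp add: measure_def)
  qed
  have part2: "lr_le (cond_law M (\<lambda>\<omega>. X \<omega> - \<theta>) {\<omega> \<in> space M. X \<omega> > \<theta>}) W"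
    if th: "\<theta> \<ge> 0" and pos: "measure M {\<omega> \<in> space M. X \<omega> > \<theta>} > 0" for \<theta> :: real
  proof -
    have e: "emeasure M (X -` {\<theta><..} \<inter> space M) \<noteq> 0" using ne pos sgt by simp
    let ?U = "distr (uniform_measure M (X -` {\<theta><..} \<inter> space M)) borel (\<lambda>\<omega>. X \<omega> - \<theta>)"
    have cl: "cond_law M (\<lambda>\<omega>. X \<omega> - \<theta>) {\<omega> \<in> space M. X \<omega> > \<theta>} = ?U"
      unfolding cond_law_def sgt ..
    have Up: "prob_space ?U"
      using cond_prob[OF Mp Xm greaterThan_borel, where T="\<lambda>x. x - \<theta>"] e by simp
    have eU: "emeasure ?U C = (\<integral>\<^sup>+x. ennreal (f x) * (indicator {\<theta><..} x * indicator C (x - \<theta>)) \<partial>lborel) / emeasure M (X -` {\<theta><..} \<inter> space M)"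
      if C[measurable]: "C \<in> sets borel" for C
    proof -
      have "emeasure ?U C = (\<integral>\<^sup>+y. indicator C y \<partial>?U)"
        by (rule nn_integral_indicator[symmetric]) simp
      also have "\<dots> = (\<integral>\<^sup>+x. ennreal (f x) * (indicator {\<theta><..} x * indicator C (x - \<theta>)) \<partial>lborel) / emeasure M (X -` {\<theta><..} \<inter> space M)"
        by (rule cond_nn[OF D greaterThan_borel, where T="\<lambda>x. x - \<theta>"]) measurable
      finally show ?thesis .
    qed
    show ?thesis unfolding cl
    proof (rule lr_from_enn[OF Up Wp])
      fix A B :: "real set" assume A[measurable]: "A \<in> sets borel" and B[measurable]: "B \<in> sets borel"
        and AB: "\<forall>a\<in>A. \<forall>b\<in>B. a \<le> b"
      show "emeasure ?U B * emeasure W A \<le> emeasure ?U A * emeasure W B"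
        unfolding eU[OF A] eU[OF B] WF(3)[OF A] WF(3)[OF B]
        by (rule ineq_div[OF key1[OF lc nn fm th A B AB]])
    qed
  qed
  have part3: "lr_le (cond_law M (\<lambda>\<omega>. - (X \<omega> + \<theta>)) {\<omega> \<in> space M. X \<omega> < - \<theta>}) W"
    if th: "\<theta> \<ge> 0" and pos: "measure M {\<omega> \<in> space M. X \<omega> < - \<theta>} > 0" for \<theta> :: real
  proof -
    have e: "emeasure M (X -` {..< -\<theta>} \<inter> space M) \<noteq> 0" using ne pos slt by simp
    let ?U = "distr (uniform_measure M (X -` {..< -\<theta>} \<inter> space M)) borel (\<lambda>\<omega>. - (X \<omega> + \<theta>))"
    have cl: "cond_law M (\<lambda>\<omega>. - (X \<omega> + \<theta>)) {\<omega> \<in> space M. X \<omega> < - \<theta>} = ?U"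
      unfolding cond_law_def slt ..
    have Up: "prob_space ?U"
      using cond_prob[OF Mp Xm lessThan_borel, where T="\<lambda>x. - (x + \<theta>)"] e by simp
    have eU: "emeasure ?U C = (\<integral>\<^sup>+x. ennreal (f x) * (indicator {..< -\<theta>} x * indicator C (- (x + \<theta>))) \<partial>lborel) / emeasure M (X -` {..< -\<theta>} \<inter> space M)"
      if C[measurable]: "C \<in> sets borel" for C
    proof -
      have "emeasure ?U C = (\<integral>\<^sup>+y. indicator C y \<partial>?U)"
        by (rule nn_integral_indicator[symmetric]) simp
      also have "\<dots> = (\<integral>\<^sup>+x. ennreal (f x) * (indicator {..< -\<theta>} x * indicator C (- (x + \<theta>))) \<partial>lborel) / emeasure M (X -` {..< -\<theta>} \<inter> space M)"
        by (rule cond_nn[OF D lessThan_borel, where T="\<lambda>x. - (x + \<theta>)"]) measurable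
      finally show ?thesis .
    qed
    show ?thesis unfolding cl
    proof (rule lr_from_enn[OF Up Wp])
      fix A B :: "real set" assume A[measurable]: "A \<in> sets borel" and B[measurable]: "B \<in> sets borel"
        and AB: "\<forall>a\<in>A. \<forall>b\<in>B. a \<le> b"
      show "emeasure ?U B * emeasure W A \<le> emeasure ?U A * emeasure W B"
        unfolding eU[OF A] eU[OF B] WF(2)[OF A] WF(2)[OF B]
        by (rule ineq_div[OF key2[OF lc nn fm th A B AB]])
    qed
  qed
  show ?thesis unfolding Z using part1 part2 part3 by blast
qed

end
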